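(* Let $n\ge2$, $1<p<\infty$, $R>0$, $\bar\beta>0$ a constant, and let $\rho$ and $f$ be as in the context. Then the function $$g(z)=f(z^{1/n})\,z^{1-\frac1n},\qquad 0\le z\le R^n,$$ is convex on $[0,R^n]$.
   Context: $F:\mathbb R^n\to[0,\infty)$ is convex, even, positively 1-homogeneous, with $a|\xi|\le F(\xi)\le b|\xi|$ ($0<a\le b$), $F\in C^2(\mathbb R^n\setminus\{0\})$, Hessian of $F^p$ positive definite off the origin; $F^o(v)=\sup_{\xi\ne0}\langle\xi,v\rangle/F(\xi)$ and $\mathcal W_R=\{x:F^o(x)<R\}$. $\ell_1(\bar\beta,\mathcal W_R)=\inf_{v\in W^{1,p}(\mathcal W_R),v\not\equiv0}\frac{\int_{\mathcal W_R}F^p(\nabla v)dx+\bar\beta\int_{\partial\mathcal W_R}|v|^pF(\nu)d\mathcal H^{n-1}}{\int_{\mathcal W_R}|v|^pdx}$ ($\nu$ the Euclidean outer normal). It is known that the positive first eigenfunction on $\mathcal W_R$ has the form $v(x)=\rho(F^o(x))$, where $\rho\in C^\infty(]0,R[)\cap C^1([0,R])$ is positive, decreasing, and solves $-(p-1)(-\rho'(r))^{p-2}\rho''(r)+\frac{n-1}{r}(-\rho'(r))^{p-1}=\ell_1(\bar\beta,\mathcal W_R)\rho(r)^{p-1}$ for $r\in]0,R[$, $\rho'(0)=0$, $-(-\rho'(R))^{p-1}+\bar\beta\rho(R)^{p-1}=0$. Define $f(r)=\dfrac{(-\rho'(r))^{p-1}}{\rho(r)^{p-1}}$ for $r\in[0,R]$.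 *)

theory Defs
  imports "HOL-Analysis.Analysis"
begin

definition fratio :: "real \<Rightarrow> (real \<Rightarrow> real) \<Rightarrow> (real \<Rightarrow> real) \<Rightarrow> real \<Rightarrow> real" where
  "fratio p \<rho> \<rho>' r = (- \<rho>' r) powr (p - 1) / (\<rho> r) powr (p - 1)"

end

theory Submission
  imports Defs
begin

lemma convex_Icc_deriv:
  fixes g g' :: "real \<Rightarrow> real" and a b :: real
  assumes cont: "continuous_on {a..b} g"
    and der: "\<And>x. a < x \<Longrightarrow> x < b \<Longrightarrow> (g has_real_derivative g' x) (at x)"
    and mono: "\<And>x y. a < x \<Longrightarrow> x \<le> y \<Longrightarrow> y < b \<Longrightarrow> g' x \<le> g' y"
  shows "convex_on {a..b} g"
proof (rule convex_on_linorderI)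
  show "convex {a..b}" by simp
next
  fix t x y :: real
  assume t: "t > 0" "t < 1"
  assume xy: "x \<in> {a..b}" "y \<in> {a..b}" "x < y"
  define z where "z = (1 - t) * x + t * y"
  from xy t have xz: "z > x"
    by (simp add: z_def algebra_simps)
  have "y - z = (1 - t) * (y - x)"
    by (simp add: z_def algebra_simps)
  also from xy t have "\<dots> > 0"
    by (intro mult_pos_pos) simp_all
  finally have yz: "z < y"
    by simp
  have c1: "continuous_on {x..z} g"
    using continuous_on_subset[OF cont] xy yz by auto
  have c2: "continuous_on {z..y} g"
    using continuous_on_subset[OF cont] xy xz by auto
  obtain l \<xi> where \<xi>: "x < \<xi>" "\<xi> < z" "DERIV g \<xi> :> l" "g z - g x = (z - x) * l"
    using MVT[OF xz c1] der xy yz real_differentiable_def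
    by (metis atLeastAtMost_iff dual_order.strict_trans less_eq_real_def)
  have l: "l = g' \<xi>"
    using DERIV_unique[OF \<xi>(3) der[of \<xi>]] \<xi> xy yz by auto
  obtain m \<eta> where \<eta>: "z < \<eta>" "\<eta> < y" "DERIV g \<eta> :> m" "g y - g z = (y - z) * m"
    using MVT[OF yz c2] der xy xz real_differentiable_def
    by (metis atLeastAtMost_iff dual_order.strict_trans less_eq_real_def)
  have m: "m = g' \<eta>"
    using DERIV_unique[OF \<eta>(3) der[of \<eta>]] \<eta> xy xz by auto
  have "l \<le> m" using mono[of \<xi> \<eta>] l m \<xi> \<eta> xy by auto
  then have "(y - z) * (z - x) * l \<le> (y - z) * (z - x) * m"
    using xz yz by (intro mult_left_mono) auto
  moreover have "(g y - g z) * (z - x) = (y - z) * (z - x) * m"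
    using \<eta>(4) by simp
  moreover have "(g z - g x) * (y - z) = (y - z) * (z - x) * l"
    using \<xi>(4) by simp
  ultimately have "(g y - g z) * (z - x) \<ge> (g z - g x) * (y - z)"
    by linarith
  also have "z - x = t * (y - x)"
    by (simp add: z_def algebra_simps)
  also have "y - z = (1 - t) * (y - x)"
    by (simp add: z_def algebra_simps)
  finally have "(g y - g z) * t \<ge> (g z - g x) * (1 - t)"
    using xy by simp
  then show "(1 - t) * g x + t * g y \<ge> g ((1 - t) *\<^sub>R x + t *\<^sub>R y)"
    by (simp add: z_def algebra_simps)
qed

lemma alg_G:
  fixes p c b q A1 A2 B1 B2 lam x N :: real
  assumes "B2 > 0" "b > 0" "B1 = B2 * b" "x \<noteq> 0"
    and ode: "- (p - 1) * A2 * c + N / x * A1 = lam * B1"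
  shows "(p - 1) * (A2 / B2) * (- c / b + q) = lam - N / x * (A1 / B1) + (p - 1) * ((A2 / B2) * q)"
proof -
  have B1: "B1 > 0" using assms by simp
  have "(p - 1) * (A2 / B2) * (- c / b) = (- (p - 1) * A2 * c) / B1"
    using assms by (simp add: field_simps)
  also have "\<dots> = (lam * B1 - N / x * A1) / B1" using ode by (simp add: algebra_simps)
  also have "\<dots> = lam - N / x * (A1 / B1)" using B1 by (simp add: field_simps)
  finally have e: "(p - 1) * (A2 / B2) * (- c / b) = lam - N / x * (A1 / B1)" .
  have "(p - 1) * (A2 / B2) * (- c / b + q) = (p - 1) * (A2 / B2) * (- c / b) + (p - 1) * ((A2 / B2) * q)"
    by (metis distrib_left mult.assoc)
  then show ?thesis using e by simp
qed
theorem theorem4p5: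
  fixes n :: nat and p R \<beta> lam :: real and \<rho> \<rho>' :: "real \<Rightarrow> real"
  assumes n: "n \<ge> 2"
    and p: "1 < p"
    and R: "R > 0"
    and \<beta>: "\<beta> > 0"
    and smooth: "\<forall>k. \<forall>r\<in>{0<..<R}. ((deriv ^^ k) \<rho>) differentiable (at r)"
    and C1: "\<forall>r\<in>{0..R}. (\<rho> has_real_derivative \<rho>' r) (at r within {0..R})"
    and C1cont: "continuous_on {0..R} \<rho>'"
    and pos: "\<forall>r\<in>{0..R}. \<rho> r > 0"
    and decr: "\<forall>x\<in>{0..R}. \<forall>y\<in>{0..R}. x \<le> y \<longrightarrow> \<rho> y \<le> \<rho> x"
    and ode: "\<forall>r\<in>{0<..<R}.
       - (p - 1) * (- \<rho>' r) powr (p - 2) * deriv \<rho>' r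
       + (real n - 1) / r * (- \<rho>' r) powr (p - 1) = lam * (\<rho> r) powr (p - 1)"
    and bc0: "\<rho>' 0 = 0"
    and bcR: "- ((- \<rho>' R) powr (p - 1)) + \<beta> * (\<rho> R) powr (p - 1) = 0"
  shows "convex_on {0..R ^ n}
           (\<lambda>z. fratio p \<rho> \<rho>' (z powr (1 / real n)) * z powr (1 - 1 / real n))"
proof -
  have D1: "(\<rho> has_real_derivative \<rho>' r) (at r)" if r: "r \<in> {0<..<R}" for r
  proof -
    have "(\<rho> has_real_derivative \<rho>' r) (at r within {0..R})"
      using C1 r by auto
    then have "(\<rho> has_real_derivative \<rho>' r) (at r within {0<..<R})"
      by (rule has_field_derivative_subset) auto
    then show ?thesis by (simp add: at_within_open[OF r])
  qed
  have D2: "(\<rho>' has_real_derivative deriv \<rho>' r) (at r)" if r: "r \<in> {0<..<R}" for r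
  proof -
    have "\<forall>r\<in>{0<..<R}. ((deriv ^^ 1) \<rho>) differentiable (at r)" using smooth by blast
    then have "deriv \<rho> differentiable (at r)" using r by simp
    then obtain D where D: "(deriv \<rho> has_real_derivative D) (at r)"
      using real_differentiable_def by blast
    have eq: "deriv \<rho> x = \<rho>' x" if "x \<in> {0<..<R}" for x
      using D1[OF that] by (rule DERIV_imp_deriv)
    have "(\<rho>' has_real_derivative D) (at r)"
      by (rule has_field_derivative_transform_within_open[OF D _ r eq]) auto
    then show ?thesis by (metis DERIV_imp_deriv)
  qed
  have nonpos: "\<rho>' r \<le> 0" if r: "r \<in> {0<..<R}" for r
  proof (rule ccontr)
    assume "\<not> \<rho>' r \<le> 0"
    then obtain d where d: "d > 0" "\<forall>h>0. h < d \<longrightarrow> \<rho> r < \<rho> (r + h)"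
      using DERIV_pos_inc_right[OF D1[OF r]] by force
    define h where "h = min (d/2) ((R - r)/2)"
    have "h \<le> (R - r)/2" "h \<le> d/2" unfolding h_def by (rule min.cobounded2, rule min.cobounded1)
    moreover have "h > 0" using d r by (auto simp: h_def)
    ultimately have "h > 0" "h < d" "r + h \<le> R" using d r by auto
    then have "\<rho> r < \<rho> (r + h)" "\<rho> (r + h) \<le> \<rho> r" using d decr r by auto
    then show False by simp
  qed
  have nonposR: "\<rho>' R \<le> 0"
  proof (rule ccontr)
    assume a: "\<not> \<rho>' R \<le> 0"
    obtain d where d: "d > 0" "\<forall>x'\<in>{0..R}. dist x' R < d \<longrightarrow> dist (\<rho>' x') (\<rho>' R) < \<rho>' R"
    proof -
      have "R \<in> {0..R}" using R by auto
      moreover have "\<rho>' R > 0" using a by simp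
      ultimately show ?thesis using C1cont unfolding continuous_on_iff
        using that by blast
    qed
    define x where "x = R - min (d/2) (R/2)"
    have x: "x \<in> {0<..<R}" "dist x R < d" using d R by (auto simp: x_def dist_real_def)
    then have "dist (\<rho>' x) (\<rho>' R) < \<rho>' R" using d by auto
    then have "\<rho>' x > 0" by (auto simp: dist_real_def)
    then show False using nonpos[OF x(1)] by simp
  qed
  have negR: "\<rho>' R < 0"
  proof -
    have "\<rho> R > 0" using pos R by auto
    then have "\<beta> * (\<rho> R) powr (p - 1) > 0" using \<beta> by simp
    then have "(- \<rho>' R) powr (p - 1) \<noteq> 0" using bcR by simp
    then show ?thesis using nonposR by (cases "\<rho>' R = 0") auto
  qed

  define w where "w = (\<lambda>x. (- \<rho>' x) powr (p - 1))"
  have nonpos_all: "\<rho>' x \<le> 0" if x: "x \<in> {0..R}" for x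
  proof -
    consider "x = 0" | "x = R" | "x \<in> {0<..<R}" using x by fastforce
    then show ?thesis using bc0 nonposR nonpos by cases auto
  qed
  have wcont: "continuous_on {0..R} w"
    unfolding w_def
    by (rule continuous_on_powr') (auto intro: continuous_intros C1cont nonpos_all simp: p)
  have Dw: "(w has_real_derivative lam * \<rho> r powr (p - 1) - (real n - 1) / r * w r) (at r)"
    if r: "r \<in> {0<..<R}" and neg: "\<rho>' r < 0" for r
  proof -
    have a: "((\<lambda>x. - \<rho>' x) has_real_derivative - deriv \<rho>' r) (at r)"
      using D2[OF r] by (rule DERIV_minus)
    have b: "((\<lambda>z. z powr (p - 1)) has_real_derivative (p - 1) * (- \<rho>' r) powr (p - 1 - 1)) (at (- \<rho>' r))"
      using neg by (intro has_real_derivative_powr) auto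
    have c: "(w has_real_derivative (p - 1) * (- \<rho>' r) powr (p - 1 - 1) * (- deriv \<rho>' r)) (at r)"
      unfolding w_def using DERIV_chain2[OF b a] .
    have "(p - 1) * (- \<rho>' r) powr (p - 1 - 1) * (- deriv \<rho>' r)
        = - (p - 1) * (- \<rho>' r) powr (p - 2) * deriv \<rho>' r"
      by (simp add: algebra_simps)
    also have "\<dots> = lam * \<rho> r powr (p - 1) - (real n - 1) / r * w r"
      using ode r unfolding w_def by (simp add: algebra_simps)
    finally show ?thesis using c by simp
  qed
  have lam0: "lam \<noteq> 0"
  proof
    assume lam: "lam = 0"
    define Z where "Z = {x \<in> {0..R}. \<rho>' x = 0}"
    have Zcl: "closed Z" unfolding Z_def
      by (rule continuous_closed_preimage_constant[OF C1cont]) auto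
    have Z0: "0 \<in> Z" using bc0 R by (auto simp: Z_def)
    have Zb: "bdd_above Z" unfolding Z_def by (rule bdd_aboveI[of _ R]) auto
    define a where "a = Sup Z"
    have aZ: "a \<in> Z" unfolding a_def using closed_contains_Sup[OF _ Zb Zcl] Z0 by blast
    have a0: "0 \<le> a" unfolding a_def using cSup_upper[OF Z0 Zb] .
    have aR: "a < R"
    proof -
      have "a \<le> R" using aZ by (auto simp: Z_def)
      moreover have "a \<noteq> R" using aZ negR by (auto simp: Z_def)
      ultimately show ?thesis by simp
    qed
    have wa: "w a = 0" using aZ by (simp add: Z_def w_def)
    define W where "W = (\<lambda>x. x ^ (n - 1) * w x)"
    have Wcont: "continuous_on {a..R} W"
      unfolding W_def
      by (intro continuous_intros continuous_on_subset[OF wcont]) (use a0 in auto)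
    have WD: "(W has_real_derivative 0) (at x)" if x: "a < x" "x < R" for x
    proof -
      have xr: "x \<in> {0<..<R}" using x a0 by auto
      have "\<rho>' x \<noteq> 0"
      proof
        assume "\<rho>' x = 0"
        then have "x \<in> Z" using xr by (auto simp: Z_def)
        then have "x \<le> a" unfolding a_def using cSup_upper[OF _ Zb] by blast
        then show False using x by simp
      qed
      then have neg: "\<rho>' x < 0" using nonpos[OF xr] by simp
      have d: "(W has_real_derivative
          real (n - 1) * x ^ (n - 1 - Suc 0) * w x + x ^ (n - 1) * (lam * \<rho> x powr (p - 1) - (real n - 1) / x * w x)) (at x)"
        unfolding W_def
        by (rule DERIV_mult[OF DERIV_pow Dw[OF xr neg], THEN DERIV_cong]) (simp add: algebra_simps)
      obtain m where m: "n = Suc (Suc m)" using n by (metis add_2_eq_Suc le_Suc_ex)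
      have "real (n - 1) * x ^ (n - 1 - Suc 0) * w x + x ^ (n - 1) * (lam * \<rho> x powr (p - 1) - (real n - 1) / x * w x)
          = real (Suc m) * x ^ m * w x - x ^ m * x * ((real (Suc m)) / x * w x)"
        unfolding m lam by simp
      also have "\<dots> = 0" using xr by simp
      finally have "real (n - 1) * x ^ (n - 1 - Suc 0) * w x + x ^ (n - 1) * (lam * \<rho> x powr (p - 1) - (real n - 1) / x * w x) = 0" .
      then show ?thesis using d by simp
    qed
    have "W R = W a" by (rule DERIV_isconst_end[OF aR Wcont WD])
    moreover have "W a = 0" by (simp add: W_def wa)
    moreover have "W R > 0"
    proof -
      have "w R > 0" unfolding w_def using negR by simp
      then show ?thesis unfolding W_def using R by simp
    qed
    ultimately show False by simp
  qed
  have neg: "\<rho>' r < 0" if r: "r \<in> {0<..<R}" for r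
  proof (rule ccontr)
    assume "\<not> \<rho>' r < 0"
    then have z: "\<rho>' r = 0" using nonpos[OF r] by simp
    have "- (p - 1) * (- \<rho>' r) powr (p - 2) * deriv \<rho>' r
       + (real n - 1) / r * (- \<rho>' r) powr (p - 1) = lam * (\<rho> r) powr (p - 1)"
      using ode r by blast
    then have "lam * \<rho> r powr (p - 1) = 0" using z by simp
    moreover have "\<rho> r > 0" using pos r by auto
    then have "\<rho> r powr (p - 1) > 0" by simp
    ultimately show False using lam0 by simp
  qed

  have rhocont: "continuous_on {0..R} \<rho>"
    by (rule DERIV_continuous_on[of _ _ \<rho>']) (use C1 in auto)
  define u where "u = (\<lambda>x. - \<rho>' x / \<rho> x)"
  define up where "up = (\<lambda>x. (- deriv \<rho>' x * \<rho> x - (- \<rho>' x) * \<rho>' x) / (\<rho> x * \<rho> x))"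
  have ucont: "continuous_on {0..R} u"
    unfolding u_def
    by (intro continuous_intros C1cont rhocont) (use pos in auto)
  have u0: "u 0 = 0" by (simp add: u_def bc0)
  have upos: "u x > 0" if x: "x \<in> {0<..R}" for x
  proof -
    have "\<rho>' x < 0" using x neg negR by (cases "x = R") auto
    moreover have "\<rho> x > 0" using pos x by auto
    ultimately show ?thesis by (simp add: u_def divide_neg_pos)
  qed
  have unn: "u x \<ge> 0" if x: "x \<in> {0..R}" for x
    using x u0 upos by (cases "x = 0") (auto simp: less_imp_le)
  have Du: "(u has_real_derivative up x) (at x)" if x: "x \<in> {0<..<R}" for x
  proof -
    have "\<rho> x > 0" using pos x by auto
    then show ?thesis unfolding u_def up_def
      by (intro DERIV_divide DERIV_minus D1 D2 x) auto
  qed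
  define Gf where "Gf = (\<lambda>x. lam - (real n - 1) / x * u x powr (p - 1) + (p - 1) * u x powr p)"
  have Gid: "(p - 1) * u x powr (p - 2) * up x = Gf x" if x: "x \<in> {0<..<R}" for x
  proof -
    define a where "a = - \<rho>' x"
    define b where "b = \<rho> x"
    define c where "c = deriv \<rho>' x"
    have a: "a > 0" using neg[OF x] by (simp add: a_def)
    have b: "b > 0" using pos x by (auto simp: b_def)
    have ux: "u x = a / b" by (simp add: u_def a_def b_def)
    have upx: "up x = - c / b + (a / b)^2"
      using b by (simp add: up_def a_def b_def c_def field_simps power2_eq_square)
    have h1: "(a / b) powr (p - 2) = a powr (p - 2) / b powr (p - 2)" by (rule powr_divide)
    have h2: "b powr (p - 1) = b powr (p - 2) * b"
    proof -
      have "b powr (p - 2) * b = b powr (p - 2) * b powr 1" using b by simp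
      also have "\<dots> = b powr (p - 2 + 1)" by (rule powr_add[symmetric])
      also have "p - 2 + 1 = p - 1" by simp
      finally show ?thesis by simp
    qed
    have h3: "(a / b) powr p = (a / b) powr (p - 2) * (a / b)^2"
    proof -
      have "(a / b) powr p = (a / b) powr (p - 2) * (a / b) powr (real 2)"
        by (simp add: powr_add[symmetric])
      then show ?thesis using a b by (simp add: powr_realpow)
    qed
    have h4: "(a / b) powr (p - 1) = a powr (p - 1) / b powr (p - 1)" by (rule powr_divide)
    have odex: "- (p - 1) * a powr (p - 2) * c + (real n - 1) / x * a powr (p - 1) = lam * b powr (p - 1)"
      using ode x by (simp add: a_def b_def c_def)
    have "(p - 1) * (a powr (p - 2) / b powr (p - 2)) * (- c / b + (a / b)^2)
        = lam - (real n - 1) / x * (a powr (p - 1) / b powr (p - 1)) + (p - 1) * ((a powr (p - 2) / b powr (p - 2)) * (a / b)^2)"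
      by (rule alg_G[OF _ b h2 _ odex]) (use b x in auto)
    then show ?thesis unfolding Gf_def ux upx h1 h3 h4 by simp
  qed

  have Fpos: "(p - 1) * u x powr (p - 2) > 0" if x: "x \<in> {0<..<R}" for x
    using upos[of x] x p by auto
  have upG: "up x = Gf x / ((p - 1) * u x powr (p - 2))" if x: "x \<in> {0<..<R}" for x
  proof -
    have "up x * ((p - 1) * u x powr (p - 2)) = Gf x" using Gid[OF x] by (simp add: ac_simps)
    moreover have "(p - 1) * u x powr (p - 2) \<noteq> 0" using Fpos[OF x] by linarith
    ultimately show ?thesis by (metis nonzero_mult_div_cancel_right)
  qed
  have Gnn: "Gf r0 \<ge> 0" if r0: "r0 \<in> {0<..<R}" for r0
  proof (rule ccontr)
    assume "\<not> Gf r0 \<ge> 0"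
    then have G0: "Gf r0 < 0" by simp
    have uc0: "continuous_on {0..r0} u"
      by (rule continuous_on_subset[OF ucont]) (use r0 in auto)
    obtain r1 where r1: "r1 \<in> {0..r0}" and r1max: "\<forall>y\<in>{0..r0}. u y \<le> u r1"
      using continuous_attains_sup[OF compact_Icc _ uc0] r0 by auto
    have "u r0 \<le> u r1" using r1max r0 by auto
    moreover have "u r0 > 0" using upos r0 by auto
    ultimately have "r1 \<noteq> 0" using u0 by auto
    then have r1pos: "r1 > 0" using r1 by auto
    show False
    proof (cases "r1 = r0")
      case True
      have "up r0 < 0" using upG[OF r0] Fpos[OF r0] G0 by (simp add: divide_neg_pos)
      then obtain d where d: "d > 0" "\<forall>h>0. h < d \<longrightarrow> u r0 < u (r0 - h)"
        using DERIV_neg_dec_left[OF Du[OF r0]] by blast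
      define h where "h = min (d/2) (r0/2)"
      have "h \<le> d/2" "h \<le> r0/2" unfolding h_def by (rule min.cobounded1, rule min.cobounded2)
      moreover have "h > 0" using d r0 by (auto simp: h_def)
      ultimately have "u r0 < u (r0 - h)" "r0 - h \<in> {0..r0}" using d r0 by auto
      then show False using r1max True by (metis not_le)
    next
      case False
      then have r1r0: "r1 < r0" using r1 by auto
      have r1R: "r1 \<in> {0<..<R}" using r1pos r1r0 r0 by auto
      have "up r1 = 0"
      proof (rule DERIV_local_max[OF Du[OF r1R]])
        show "0 < min r1 (r0 - r1)" using r1pos r1r0 by simp
        show "\<forall>y. \<bar>r1 - y\<bar> < min r1 (r0 - r1) \<longrightarrow> u y \<le> u r1"
          using r1max by (auto simp: abs_if split: if_splits)
      qed
      then have Gr1: "Gf r1 = 0" using Gid[OF r1R] by simp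
      define K where "K = (\<lambda>y. - (real n - 1) / r1 * u y powr (p - 1) + (p - 1) * u y powr p)"
      have ur1: "u r1 > 0" using upos r1R by auto
      have KD: "(K has_real_derivative 0) (at r1)"
      proof -
        have "(K has_real_derivative
            - (real n - 1) / r1 * ((p - 1) * u r1 powr (p - 1 - 1) * up r1)
            + (p - 1) * (p * u r1 powr (p - 1) * up r1)) (at r1)"
          unfolding K_def
          by (intro DERIV_add DERIV_cmult DERIV_chain2[OF has_real_derivative_powr Du[OF r1R]] ur1)
        then show ?thesis using \<open>up r1 = 0\<close> by simp
      qed
      have L1: "((\<lambda>y. (K y - K r1) / (y - r1)) \<longlongrightarrow> 0) (at_right r1)"
        using KD unfolding has_field_derivative_iff
        by (rule tendsto_mono[OF at_le, rotated]) auto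
      have uc1: "(u \<longlongrightarrow> u r1) (at_right r1)"
        using DERIV_isCont[OF Du[OF r1R]] unfolding isCont_def
        by (rule tendsto_mono[OF at_le, rotated]) auto
      have L2: "((\<lambda>y. (real n - 1) * u y powr (p - 1) / (y * r1)) \<longlongrightarrow> (real n - 1) * u r1 powr (p - 1) / (r1 * r1)) (at_right r1)"
        using ur1 r1pos by (intro tendsto_intros uc1) auto
      have cpos: "(real n - 1) * u r1 powr (p - 1) / (r1 * r1) > 0"
        using n ur1 r1pos by simp
      have ev1: "eventually (\<lambda>y. 0 < (K y - K r1) / (y - r1) + (real n - 1) * u y powr (p - 1) / (y * r1)) (at_right r1)"
        using order_tendstoD(1)[OF tendsto_add[OF L1 L2]] cpos by simp
      have ev2: "eventually (\<lambda>y. y \<in> {r1<..<R}) (at_right r1)"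
        using eventually_at_right_real r1R by auto
      have "eventually (\<lambda>y. Gf y > 0) (at_right r1)"
        using ev1 ev2
      proof eventually_elim
        case (elim y)
        have yr: "y > r1" "y > 0" using elim r1pos by auto
        have "Gf y = (K y - K r1) + (real n - 1) * u y powr (p - 1) * (y - r1) / (y * r1)"
        proof -
          have lamE: "lam = (real n - 1) / r1 * u r1 powr (p - 1) - (p - 1) * u r1 powr p"
            using Gr1 unfolding Gf_def by simp
          have aux: "\<And>N U. N / r1 * U - N / y * U = N * U * (y - r1) / (y * r1)"
            using yr r1pos by (simp add: field_simps)
          have "Gf y - (K y - K r1) = (real n - 1) / r1 * u y powr (p - 1) - (real n - 1) / y * u y powr (p - 1)"
            unfolding Gf_def K_def lamE using yr r1pos by (simp add: field_simps)
          then show ?thesis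
            using aux[of "real n - 1" "u y powr (p - 1)"] by linarith
        qed
        then have "Gf y / (y - r1) = (K y - K r1) / (y - r1) + (real n - 1) * u y powr (p - 1) / (y * r1)"
          using yr by (simp add: field_simps)
        then have "Gf y / (y - r1) > 0" using elim by simp
        then show ?case using yr by (simp add: zero_less_divide_iff)
      qed
      then obtain b where b: "b > r1" "\<forall>y>r1. y < b \<longrightarrow> Gf y > 0"
        unfolding eventually_at_right_field by blast
      define s where "s = min ((r1 + b)/2) ((r1 + r0)/2)"
      have "s \<le> (r1 + b)/2" "s \<le> (r1 + r0)/2" unfolding s_def by (rule min.cobounded1, rule min.cobounded2)
      moreover have "s > r1" using b r1r0 by (auto simp: s_def)
      ultimately have s: "r1 < s" "s < b" "s < r0" using b r1r0 by auto
      obtain z where z: "r1 < z" "z < s" "u s - u r1 = (s - r1) * up z"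
        using MVT2[OF s(1), of u up] Du r1pos s r0 by force
      have zR: "z \<in> {0<..<R}" using z r1pos s r0 by auto
      have "Gf z > 0" using b z s by auto
      then have "up z > 0" using upG[OF zR] Fpos[OF zR] by simp
      then have "(s - r1) * up z > 0" using z by simp
      then have "u s > u r1" using z(3) by linarith
      moreover have "u s \<le> u r1" using r1max s r1pos by auto
      ultimately show False by simp
    qed
  qed

  have umono: "u x \<le> u y" if xy: "x \<in> {0..R}" "y \<in> {0..R}" "x \<le> y" for x y
  proof (rule DERIV_nonneg_imp_increasing_open[OF xy(3)])
    fix t assume t: "x < t" "t < y"
    then have tR: "t \<in> {0<..<R}" using xy by auto
    have "up t \<ge> 0" using upG[OF tR] Fpos[OF tR] Gnn[OF tR] by simp
    then show "\<exists>d. (u has_real_derivative d) (at t) \<and> 0 \<le> d" using Du[OF tR] by blast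
  next
    show "continuous_on {x..y} u"
      by (rule continuous_on_subset[OF ucont]) (use xy in auto)
  qed
  have nn: "real n > 0" "real n \<ge> 2" using n by auto
  define q where "q = 1 / real n"
  have q: "0 < q" "q < 1" using nn by (auto simp: q_def)
  have Rn: "(R ^ n) powr q = R"
  proof -
    have "(R ^ n) powr q = (R powr real n) powr q" using R by (simp add: powr_realpow)
    also have "\<dots> = R powr (real n * q)" by (simp add: powr_powr)
    also have "real n * q = 1" using nn by (simp add: q_def)
    finally show ?thesis using R by simp
  qed
  have rin: "z powr q \<in> {0..R}" if z: "z \<in> {0..R ^ n}" for z
  proof -
    have "z powr q \<le> (R ^ n) powr q" using z q by (intro powr_mono2) auto
    then show ?thesis using Rn by simp
  qed
  have rin2: "z powr q \<in> {0<..<R}" if z: "z \<in> {0<..<R ^ n}" for z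
  proof -
    have "z powr q < (R ^ n) powr q" using z q by (intro powr_less_mono2) auto
    then show ?thesis using Rn z by simp
  qed
  define gg where "gg = (\<lambda>z. u (z powr q) powr (p - 1) * z powr (1 - q))"
  define gd where "gd = (\<lambda>z. (lam + (p - 1) * u (z powr q) powr p) / real n)"
  have eqg: "fratio p \<rho> \<rho>' (z powr (1 / real n)) * z powr (1 - 1 / real n) = gg z" for z
    unfolding gg_def fratio_def q_def u_def powr_divide by simp
  have ggcont: "continuous_on {0..R ^ n} gg"
  proof -
    have c1: "continuous_on {0..R ^ n} (\<lambda>z. z powr q)"
      by (rule continuous_on_powr') (use q in \<open>auto intro: continuous_intros\<close>)
    have c2: "continuous_on {0..R ^ n} (\<lambda>z. u (z powr q))"
      by (rule continuous_on_compose2[OF ucont c1]) (use rin in auto)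
    have c3: "continuous_on {0..R ^ n} (\<lambda>z. u (z powr q) powr (p - 1))"
      by (rule continuous_on_powr'[OF c2]) (use p unn rin in \<open>auto intro: continuous_intros\<close>)
    have c4: "continuous_on {0..R ^ n} (\<lambda>z. z powr (1 - q))"
      by (rule continuous_on_powr') (use q in \<open>auto intro: continuous_intros\<close>)
    show ?thesis unfolding gg_def by (intro continuous_intros c3 c4)
  qed
  have ggD: "(gg has_real_derivative gd z) (at z)" if z: "z \<in> {0<..<R ^ n}" for z
  proof -
    define r where "r = z powr q"
    have r: "r \<in> {0<..<R}" using rin2[OF z] by (simp add: r_def)
    have z0: "z > 0" using z by simp
    have ur: "u r > 0" using upos r by auto
    have d1: "((\<lambda>z. z powr q) has_real_derivative q * z powr (q - 1)) (at z)"
      using z0 by (rule has_real_derivative_powr)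
    have d2: "((\<lambda>z. u (z powr q)) has_real_derivative up r * (q * z powr (q - 1))) (at z)"
      using DERIV_chain2[OF Du[OF r, unfolded r_def] d1] unfolding r_def .
    have d3: "((\<lambda>z. u (z powr q) powr (p - 1)) has_real_derivative
        (p - 1) * u r powr (p - 1 - 1) * (up r * (q * z powr (q - 1)))) (at z)"
      using DERIV_chain2[OF has_real_derivative_powr[OF ur, unfolded r_def] d2[unfolded r_def]] unfolding r_def .
    have d4: "((\<lambda>z. z powr (1 - q)) has_real_derivative (1 - q) * z powr (1 - q - 1)) (at z)"
      using z0 by (rule has_real_derivative_powr)
    have d5: "(gg has_real_derivative
        (p - 1) * u r powr (p - 1 - 1) * (up r * (q * z powr (q - 1))) * z powr (1 - q)
        + (1 - q) * z powr (1 - q - 1) * u r powr (p - 1)) (at z)"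
      unfolding gg_def using DERIV_mult[OF d3 d4] unfolding r_def by simp
    have e1: "z powr (q - 1) * z powr (1 - q) = 1"
      using z0 by (simp add: powr_add[symmetric])
    have e2: "z powr (1 - q - 1) = 1 / r"
      using z0 by (simp add: r_def powr_minus divide_inverse)
    have e3: "(p - 1) * u r powr (p - 1 - 1) * up r = Gf r"
      using Gid[OF r] by simp
    have "(p - 1) * u r powr (p - 1 - 1) * (up r * (q * z powr (q - 1))) * z powr (1 - q)
        + (1 - q) * z powr (1 - q - 1) * u r powr (p - 1)
        = ((p - 1) * u r powr (p - 1 - 1) * up r) * q * (z powr (q - 1) * z powr (1 - q))
        + (1 - q) * z powr (1 - q - 1) * u r powr (p - 1)"
      by (simp add: ac_simps)
    also have "\<dots> = Gf r * q + (1 - q) / r * u r powr (p - 1)"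
      unfolding e1 e2 e3 by simp
    also have "\<dots> = (lam + (p - 1) * u r powr p) / real n"
      unfolding Gf_def q_def using r nn by (simp add: field_simps)
    also have "\<dots> = gd z" by (simp add: gd_def r_def)
    finally show ?thesis using d5 by simp
  qed
  have gdmono: "gd x \<le> gd y" if "0 < x" "x \<le> y" "y < R ^ n" for x y
  proof -
    have x: "x \<in> {0<..<R ^ n}" and y: "y \<in> {0<..<R ^ n}" using that by auto
    have "x powr q \<le> y powr q" using that q by (intro powr_mono2) auto
    then have "u (x powr q) \<le> u (y powr q)"
      using umono rin2[OF x] rin2[OF y] by auto
    then have "u (x powr q) powr p \<le> u (y powr q) powr p"
      using unn rin2[OF x] p by (intro powr_mono2) auto
    then have "(p - 1) * u (x powr q) powr p \<le> (p - 1) * u (y powr q) powr p"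
      using p by (intro mult_left_mono) auto
    then show ?thesis unfolding gd_def using nn by (intro divide_right_mono) auto
  qed
  have "convex_on {0..R ^ n} gg"
    by (rule convex_Icc_deriv[OF ggcont ggD gdmono]) auto
  then show ?thesis unfolding eqg .

qed

end
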